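(* Let $\eta,\delta,M$ be integers greater than $1$ and let $f$ be a positive integer, with $\gcd(\eta,\delta)=1$ (so that $\mu=\eta/\delta$ is an irreducible fraction). Suppose that $$(\delta f)^{2}-M(\eta+\delta)^{2}=\delta^{2}\,\frac{M+1}{3},$$ equivalently $M=\dfrac{\delta^{2}(3f^{2}-1)}{3(\eta+\delta)^{2}+\delta^{2}}$, and suppose moreover that $M$ is a number of terms for which a sum of $M$ consecutive squares can be a perfect square, i.e. there is an integer $a\geq 1$ such that $\sum_{i=0}^{M-1}(a+i)^{2}$ is a perfect square. Then $\eta\equiv 1 \pmod 2$ and $\delta\equiv 0,1$ or $5 \pmod 6$; furthermore, if $\delta\equiv 0\pmod 6$ then $M\equiv 0\pmod{12}$, and if $\delta\equiv 1$ or $5\pmod 6$ then $M\equiv 2 \pmod{12}$ when $f$ is odd and $M\equiv 11\pmod{12}$ when $f$ is even. More precisely, $(\delta,\eta,f,M)$ satisfy one of the following: (a) $\delta\equiv 0\pmod{36}$, $\eta\equiv 1$ or $5\pmod 6$, $f$ arbitrary, $M\equiv 0\pmod{144}$; (b) $\delta\equiv 12$ or $24\pmod{36}$, $\eta\equiv 1$ or $5\pmod 6$, $f$ arbitrary, $M\equiv 96\pmod{144}$; (c) $\delta\equiv 6$ or $30\pmod{36}$, $\eta\equiv 1$ or $5\pmod 6$, $f\equiv 1\pmod 2$, $M\equiv 24\pmod{144}$; (d) $\delta\equiv 18\pmod{36}$, $\eta\equiv 1$ or $5\pmod 6$, $f\equiv 1\pmod 2$, $M\equiv 72\pmod{144}$;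 (e) $\delta\equiv 1\pmod 6$: if $f\equiv 1$ or $5\pmod 6$, then $M\equiv 50\pmod{72}$ when $\eta\equiv 1$ or $3\pmod 6$, and $M\equiv 2\pmod{72}$ when $\eta\equiv 5\pmod 6$; if $f\equiv 3\pmod 6$, then $M\equiv 2\pmod{72}$ when $\eta\equiv 1$ or $3\pmod 6$, and $M\equiv 26\pmod{72}$ when $\eta\equiv 5\pmod 6$; if $f\equiv 0\pmod 6$, then $M\equiv 11\pmod{36}$ when $\eta\equiv 1$ or $3\pmod 6$, and $M\equiv 35\pmod{36}$ when $\eta\equiv 5\pmod 6$; if $f\equiv 2$ or $4\pmod 6$, then $M\equiv 23\pmod{36}$ when $\eta\equiv 1$ or $3\pmod 6$, and $M\equiv 11\pmod{36}$ when $\eta\equiv 5\pmod 6$; (f) $\delta\equiv 5\pmod 6$: if $f\equiv 1$ or $5\pmod 6$, then $M\equiv 2\pmod{72}$ when $\eta\equiv 1\pmod 6$, and $M\equiv 50\pmod{72}$ when $\eta\equiv 3$ or $5\pmod 6$; if $f\equiv 3\pmod 6$, then $M\equiv 26\pmod{72}$ when $\eta\equiv 1\pmod 6$, and $M\equiv 2\pmod{72}$ when $\eta\equiv 3$ or $5\pmod 6$; if $f\equiv 0\pmod 6$, then $M\equiv 35\pmod{36}$ when $\eta\equiv 1\pmod 6$, and $M\equiv 11\pmod{36}$ when $\eta\equiv 3$ or $5\pmod 6$; if $f\equiv 2$ or $4\pmod 6$, then $M\equiv 11\pmod{36}$ when $\eta\equiv 1\pmod 6$, and $M\equiv 23\pmod{36}$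 when $\eta\equiv 3$ or $5\pmod 6$.
   Context: Setting: for $\mu=\eta/\delta$, two positive integers $a_1,a_2$ with $a_1+a_2=\mu M+1$ and $a_2-a_1=f$ form a "pair" for the number of terms $M$; when $M=\delta^2(3f^2-1)/(3(\eta+\delta)^2+\delta^2)$ the sums $\sum_{i=0}^{M-1}(a_j+i)^2$ ($j=1,2$) are perfect squares. It is known from earlier work (cited, not proved in this paper) that a sum of $M>1$ consecutive squares $\sum_{i=0}^{M-1}(a+i)^2$ with $a\ge 1$ can be a perfect square only if $M\equiv 0$ or $24\pmod{72}$, or $M\equiv 1,2$ or $16\pmod{24}$, or $M\equiv 9$ or $33\pmod{72}$, or $M\equiv 11\pmod{12}$; in particular $M\equiv 0,1,2,4,9$ or $11\pmod{12}$. *)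

theory Defs
  imports Main
begin

end

theory Submission imports Defs "HOL-Number_Theory.Number_Theory" begin


lemma fermat_int:
  fixes p :: nat and x :: int
  assumes "prime p" "\<not> int p dvd x"
  shows "[x^(p-1) = 1] (mod int p)"
proof -
  define a where "a = nat (x mod int p)"
  have p0: "int p > 0" using assms(1) prime_gt_0_nat by simp
  have ia: "int a = x mod int p" using p0 unfolding a_def by simp
  have "\<not> p dvd a"
  proof
    assume "p dvd a"
    then have "int p dvd int a" by simp
    then have "int p dvd x mod int p" using ia by simp
    then show False using assms(2) by (simp add: dvd_mod_iff)
  qed
  then have "[a^(p-1) = 1] (mod p)" using fermat_theorem assms(1) by blast
  then have "[int (a^(p-1)) = int 1] (mod int p)" using cong_int_iff by blast
  then have "[int a^(p-1) = 1] (mod int p)" by simp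
  moreover have "[x = int a] (mod int p)" using ia by (simp add: cong_def)
  then have "[x^(p-1) = int a^(p-1)] (mod int p)" by (rule cong_pow)
  ultimately show ?thesis using cong_trans by blast
qed

lemma prime_sumsq:
  fixes p :: nat and x y :: int
  assumes "prime p" "odd p" "int p dvd x^2 + y^2" "\<not> int p dvd y"
  shows "p mod 4 = 1"
proof (rule ccontr)
  assume "p mod 4 \<noteq> 1"
  with assms(2) have "p mod 4 = 3" by presburger
  then obtain m where pm: "p = 4*m+3" by (metis div_mult_mod_eq add.commute mult.commute)
  have nx: "\<not> int p dvd x"
  proof
    assume "int p dvd x"
    then have "int p dvd x^2" by (simp add: power2_eq_square)
    with assms(3) have "int p dvd y^2" using dvd_add_right_iff by blast
    moreover have "prime (int p)" using assms(1) by simp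
    ultimately have "int p dvd y" using prime_dvd_power_iff[of "int p" 2 y] by simp
    with assms(4) show False by simp
  qed
  have fx: "[x^(p-1) = 1] (mod int p)" using fermat_int assms(1) nx by blast
  have fy: "[y^(p-1) = 1] (mod int p)" using fermat_int assms(1) assms(4) by blast
  have e1: "[x^2 = - (y^2)] (mod int p)" using assms(3)
    by (simp add: cong_iff_dvd_diff)
  have "[(x^2)^(2*m+1) = (- (y^2))^(2*m+1)] (mod int p)" using e1 by (rule cong_pow)
  moreover have pp: "p - 1 = 2*(2*m+1)" using pm by simp
  moreover have "(x^2)^(2*m+1) = x^(p-1)" unfolding pp by (simp only: power_mult)
  moreover have "(- (y^2))^(2*m+1) = - (y^(p-1))" unfolding pp
    by (simp only: power_mult power_minus_odd) simp
  ultimately have "[x^(p-1) = - (y^(p-1))] (mod int p)" by simp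
  then have "[1 = -1] (mod int p)" using fx fy
    by (metis cong_minus_minus_iff cong_sym cong_trans)
  then have "int p dvd 2" by (simp add: cong_iff_dvd_diff)
  then have "p dvd 2" by (metis of_nat_dvd_iff of_nat_numeral)
  then have "p \<le> 2" by (simp add: dvd_imp_le)
  with pm show False by simp
qed

lemma sumsq_mod4:
  fixes n :: nat and x y :: int
  assumes "odd n" "int n dvd x^2 + y^2" "coprime y (int n)"
  shows "n mod 4 = 1"
  using assms
proof (induction n rule: less_induct)
  case (less n)
  show ?case
  proof (cases "n = 1")
    case True then show ?thesis by simp
  next
    case False
    have "n \<noteq> 0" using less.prems(1) by (metis odd_pos neq0_conv)
    with False obtain p where p: "prime p" "p dvd n" using prime_factor_nat by blast
    then obtain n' where n': "n = p * n'" by blast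
    have pgt: "p > 1" using p(1) prime_gt_1_nat by blast
    have n'0: "n' > 0" using n' \<open>n \<noteq> 0\<close> by auto
    have lt: "n' < n" using n' pgt n'0 by simp
    have on': "odd n'" "odd p" using less.prems(1) n' by auto
    have d1: "int n' dvd x^2+y^2" using less.prems(2) n' by (metis dvd_mult_right of_nat_mult)
    have d2: "int p dvd x^2+y^2" using less.prems(2) n' by (metis dvd_mult_left of_nat_mult)
    have c1: "coprime y (int n')" using less.prems(3) n' by (metis coprime_mult_right_iff of_nat_mult)
    have c2: "coprime y (int p)" using less.prems(3) n' by (metis coprime_mult_right_iff of_nat_mult)
    have ndy: "\<not> int p dvd y"
    proof
      assume "int p dvd y"
      then have "int p dvd gcd y (int p)" by simp
      with c2 have "int p dvd 1" by simp
      with pgt show False by simp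
    qed
    have "n' mod 4 = 1" using less.IH[OF lt on'(1) d1 c1] .
    moreover have "p mod 4 = 1" using prime_sumsq[OF p(1) on'(2) d2 ndy] .
    ultimately show ?thesis using n' by (metis mod_mult_eq mult_1 mod_mod_trivial)
  qed
qed

lemma sumsq_int:
  fixes D x y :: int
  assumes "D > 0" "D mod 4 = 3" "D dvd x^2 + y^2" "coprime y D"
  shows False
proof -
  have od: "odd (nat D)" using assms(1,2) by (simp add: even_nat_iff) presburger
  have "nat D mod 4 = 1"
    by (rule sumsq_mod4[of "nat D" x y]) (use assms od in auto)
  moreover have "nat D mod 4 = nat (D mod 4)" using assms(1) by (simp add: nat_mod_distrib)
  ultimately show False using assms(2) by simp
qed




lemma sum_sq_nat:
  fixes a :: int
  shows "6 * (\<Sum>i\<in>{0..int n - 1}. (a + i)^2) = 6*int n*a^2 + 6*a*int n*(int n - 1) + int n*(int n - 1)*(2*int n - 1)"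
proof (induction n)
  case 0 then show ?case by simp
next
  case (Suc n)
  have "{0..int (Suc n) - 1} = insert (int n) {0..int n - 1}" by auto
  then have "(\<Sum>i\<in>{0..int (Suc n) - 1}. (a + i)^2) = (a + int n)^2 + (\<Sum>i\<in>{0..int n - 1}. (a + i)^2)"
    by simp
  then show ?case using Suc by (simp add: algebra_simps power2_eq_square)
qed

lemma sq_mod4: "(k::int)^2 mod 4 \<in> {0,1}"
proof -
  have "k mod 4 \<in> {0,1,2,3}" by auto
  moreover have "k^2 mod 4 = ((k mod 4)^2) mod 4" by (simp add: power_mod)
  ultimately show ?thesis by auto
qed

lemma not_sq_M4:
  fixes M a :: int
  assumes "M mod 8 = 4" "M > 0" "(\<Sum>i\<in>{0..M-1}. (a + i)^2) = k^2"
  shows False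
proof -
  obtain t where t: "M = 8*t+4" using assms(1) by (metis div_mult_mod_eq add.commute mult.commute)
  have M0: "M \<ge> 0" using assms(2) by simp
  define S where "S = (\<Sum>i\<in>{0..M-1}. (a + i)^2)"
  have "6*S = 6*M*a^2 + 6*a*M*(M - 1) + M*(M - 1)*(2*M - 1)"
    using sum_sq_nat[where n="nat M" and a=a] M0 unfolding S_def by simp
  then have "3*S = 4*(3*(2*t+1)*a^2 + 3*a*(2*t+1)*(8*t+3)) + 2*((2*t+1)*(8*t+3)*(16*t+7))"
    unfolding t by (simp add: algebra_simps)
  moreover have "(2*t+1)*(8*t+3)*(16*t+7) = 2*(128*t^3 + 168*t^2+ 73*t + 10) + 1"
    by (simp add: algebra_simps power2_eq_square power3_eq_cube)
  ultimately have "3*S = 4*(3*(2*t+1)*a^2 + 3*a*(2*t+1)*(8*t+3) + (128*t^3 + 168*t^2+ 73*t + 10)) + 2"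
    by (simp add: algebra_simps)
  then have "S mod 4 = 2" by presburger
  with assms(3) sq_mod4[of k] show False unfolding S_def by auto
qed



lemma int_range16: "0 \<le> (r::int) \<Longrightarrow> r < 16 \<Longrightarrow> r \<in> {0,1,2,3,4,5,6,7,8,9,10,11,12,13,14,15}"
  unfolding insert_iff empty_iff by presburger
lemma int_range9: "0 \<le> (r::int) \<Longrightarrow> r < 9 \<Longrightarrow> r \<in> {0,1,2,3,4,5,6,7,8}"
  unfolding insert_iff empty_iff by presburger

lemma res16_odd:
  fixes r A B G :: int
  assumes "0 \<le> r" "r < 16" "A \<in> {0,12}" "B \<in> {1,9}" "G \<in> {2,10}"
    "(r*(A+B)) mod 16 = (B*G) mod 16"
  shows "r mod 8 = 2"
  using int_range16[OF assms(1,2)] assms(3-6) by auto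

lemma res16_even:
  fixes r A B G :: int
  assumes "0 \<le> r" "r < 16" "A \<in> {0,12}" "B \<in> {1,9}" "G \<in> {11,15}"
    "(r*(A+B)) mod 16 = (B*G) mod 16"
  shows "r mod 4 = 3"
  using int_range16[OF assms(1,2)] assms(3-6) by auto

lemma res9:
  fixes r A B G :: int
  assumes "0 \<le> r" "r < 9" "A \<in> {0,3}" "B \<in> {1,4,7}" "G \<in> {2,8}"
    "(r*(A+B)) mod 9 = (B*G) mod 9"
  shows "r = (if A = 0 then (if G = 2 then 2 else 8) else (if G = 2 then 5 else 2))"
  using int_range9[OF assms(1,2)] assms(3-6) by auto

lemma t1: "(3*x - 1::int) mod 3 = 2" by presburger
lemma t2: "(x::int)^2 mod 3 = ((x mod 3)^2) mod 3" by (simp add: power_mod)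



lemma cop_236:
  fixes x :: int
  assumes "odd x" "\<not> 3 dvd x"
  shows "coprime (2^a * 3^b) x"
proof -
  have "coprime 2 x" using assms(1) by (simp add: coprime_commute)
  moreover have "coprime 3 x"
    using assms(2) by (simp add: prime_imp_coprime)
  ultimately show ?thesis by simp
qed

lemma sq_mod3: "\<not> 3 dvd (j::int) \<Longrightarrow> j^2 mod 3 = 1"
proof -
  assume "\<not> 3 dvd j"
  then have "j mod 3 \<in> {1,2}" by auto presburger
  moreover have "j^2 mod 3 = ((j mod 3)^2) mod 3" by (simp add: power_mod)
  ultimately show ?thesis by auto
qed

lemma sq_mod8_odd: "odd (f::int) \<Longrightarrow> f^2 mod 8 = 1"
proof -
  assume "odd f"
  then have "f mod 8 \<in> {1,3,5,7}" by auto presburger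
  moreover have "f^2 mod 8 = ((f mod 8)^2) mod 8" by (simp add: power_mod)
  ultimately show ?thesis by auto
qed


lemma sqcong: "[((x::int) mod n)^2 = x^2] (mod n)"
  by (simp add: cong_def power_mod)

lemma mp1: "((a::int)*x^2 + b) mod n = (a*(x mod n)^2 + b) mod n"
proof -
  have "[a*(x mod n)^2 + b = a*x^2 + b] (mod n)" by (intro cong_add cong_mult cong_refl sqcong)
  then show ?thesis by (simp add: cong_def)
qed

lemma mp2: "((a::int)*x^2 + c*y^2) mod n = (a*(x mod n)^2 + c*(y mod n)^2) mod n"
proof -
  have "[a*(x mod n)^2 + c*(y mod n)^2 = a*x^2 + c*y^2] (mod n)" by (intro cong_add cong_mult cong_refl sqcong)
  then show ?thesis by (simp add: cong_def)
qed

lemma modcomb: "(((M::int) mod n)*((A mod n)+(B mod n))) mod n = (M*(A+B)) mod n"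
proof -
  have "[(M mod n)*((A mod n)+(B mod n)) = M*(A+B)] (mod n)"
    by (intro cong_add cong_mult) (simp_all add: cong_def)
  then show ?thesis by (simp add: cong_def)
qed

lemma crt_split:
  fixes M :: int and m :: nat
  shows "M mod (int m * 9) = int m * ((M div int m) mod 9) + M mod int m"
    and "M mod 9 = (int m * ((M div int m) mod 9) + M mod int m) mod 9"
proof -
  show a: "M mod (int m * 9) = int m * ((M div int m) mod 9) + M mod int m"
    using mod_mult2_eq'[of M m 9] by simp
  have "M mod 9 = (M mod (int m * 9)) mod 9" by (simp add: mod_mod_cancel)
  then show "M mod 9 = (int m * ((M div int m) mod 9) + M mod int m) mod 9" using a by simp
qed

lemma crt89:
  fixes M :: int
  assumes "M mod 8 = 2"
  shows "(M mod 9 = 5 \<longrightarrow> M mod 72 = 50) \<and> (M mod 9 = 2 \<longrightarrow> M mod 72 = 2) \<and> (M mod 9 = 8 \<longrightarrow> M mod 72 = 26)"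
proof -
  define b where "b = (M div 8) mod 9"
  have r: "b \<in> {0,1,2,3,4,5,6,7,8}" unfolding b_def by (rule int_range9) simp_all
  have e1: "M mod 72 = 8*b + 2" using crt_split(1)[of M 8] assms unfolding b_def by simp
  have e2: "M mod 9 = (8*b + 2) mod 9" using crt_split(2)[of M 8] assms unfolding b_def by simp
  show ?thesis using r unfolding e1 e2 by auto
qed

lemma crt49:
  fixes M :: int
  assumes "M mod 4 = 3"
  shows "(M mod 9 = 2 \<longrightarrow> M mod 36 = 11) \<and> (M mod 9 = 8 \<longrightarrow> M mod 36 = 35) \<and> (M mod 9 = 5 \<longrightarrow> M mod 36 = 23)"
proof -
  define b where "b = (M div 4) mod 9"
  have r: "b \<in> {0,1,2,3,4,5,6,7,8}" unfolding b_def by (rule int_range9) simp_all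
  have e1: "M mod 36 = 4*b + 3" using crt_split(1)[of M 4] assms unfolding b_def by simp
  have e2: "M mod 9 = (4*b + 3) mod 9" using crt_split(2)[of M 4] assms unfolding b_def by simp
  show ?thesis using r unfolding e1 e2 by auto
qed
lemma fmod6a: "((f::int) mod 6 \<in> {1,5}) = (odd f \<and> \<not> 3 dvd f)" unfolding insert_iff empty_iff by presburger
lemma fmod6b: "((f::int) mod 6 = 3) = (odd f \<and> 3 dvd f)" by presburger
lemma fmod6c: "((f::int) mod 6 = 0) = (even f \<and> 3 dvd f)" by presburger
lemma fmod6d: "((f::int) mod 6 \<in> {2,4}) = (even f \<and> \<not> 3 dvd f)" unfolding insert_iff empty_iff by presburger

lemma int_range3: "0 \<le> (r::int) \<Longrightarrow> r < 3 \<Longrightarrow> r \<in> {0,1,2}"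
  unfolding insert_iff empty_iff by presburger

lemma crt43:
  fixes M :: int
  assumes "M mod 3 = 2"
  shows "(M mod 4 = 2 \<longrightarrow> M mod 12 = 2) \<and> (M mod 4 = 3 \<longrightarrow> M mod 12 = 11)"
proof -
  define b where "b = (M div 4) mod 3"
  have r: "b \<in> {0,1,2}" unfolding b_def by (rule int_range3) simp_all
  have e1: "M mod 12 = 4*b + M mod 4" using mod_mult2_eq'[of M 4 3] unfolding b_def by simp
  have e2: "M mod 3 = (4*b + M mod 4) mod 3"
  proof -
    have "M mod 3 = (M mod 12) mod 3" by (simp add: mod_mod_cancel)
    then show ?thesis using e1 by simp
  qed
  show ?thesis using r assms unfolding e1 e2 by auto
qed

lemma X0:
  fixes eta delta M f :: int
  assumes eodd: "odd eta" and d6: "delta mod 6 = 0" and e6: "eta mod 6 \<in> {1,5}" and M12: "M mod 12 = 0"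
   and h: "delta mod 36 = 0 \<and> M mod 144 = 0"
  shows "odd eta
    \<and> delta mod 6 \<in> {0, 1, 5}
    \<and> (delta mod 6 = 0 \<longrightarrow> M mod 12 = 0)
    \<and> (delta mod 6 \<in> {1, 5} \<longrightarrow>
          (odd f \<longrightarrow> M mod 12 = 2) \<and> (even f \<longrightarrow> M mod 12 = 11))
    \<and> ( (delta mod 36 = 0 \<and> eta mod 6 \<in> {1, 5} \<and> M mod 144 = 0)
      \<or> (delta mod 36 \<in> {12, 24} \<and> eta mod 6 \<in> {1, 5} \<and> M mod 144 = 96)
      \<or> (delta mod 36 \<in> {6, 30} \<and> eta mod 6 \<in> {1, 5} \<and> f mod 2 = 1 \<and> M mod 144 = 24)
      \<or> (delta mod 36 = 18 \<and> eta mod 6 \<in> {1, 5} \<and> f mod 2 = 1 \<and> M mod 144 = 72)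
      \<or> (delta mod 6 = 1
          \<and> (f mod 6 \<in> {1, 5} \<longrightarrow>
               (eta mod 6 \<in> {1, 3} \<longrightarrow> M mod 72 = 50) \<and> (eta mod 6 = 5 \<longrightarrow> M mod 72 = 2))
          \<and> (f mod 6 = 3 \<longrightarrow>
               (eta mod 6 \<in> {1, 3} \<longrightarrow> M mod 72 = 2) \<and> (eta mod 6 = 5 \<longrightarrow> M mod 72 = 26))
          \<and> (f mod 6 = 0 \<longrightarrow>
               (eta mod 6 \<in> {1, 3} \<longrightarrow> M mod 36 = 11) \<and> (eta mod 6 = 5 \<longrightarrow> M mod 36 = 35))
          \<and> (f mod 6 \<in> {2, 4} \<longrightarrow>
               (eta mod 6 \<in> {1, 3} \<longrightarrow> M mod 36 = 23) \<and> (eta mod 6 = 5 \<longrightarrow> M mod 36 = 11)))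
      \<or> (delta mod 6 = 5
          \<and> (f mod 6 \<in> {1, 5} \<longrightarrow>
               (eta mod 6 = 1 \<longrightarrow> M mod 72 = 2) \<and> (eta mod 6 \<in> {3, 5} \<longrightarrow> M mod 72 = 50))
          \<and> (f mod 6 = 3 \<longrightarrow>
               (eta mod 6 = 1 \<longrightarrow> M mod 72 = 26) \<and> (eta mod 6 \<in> {3, 5} \<longrightarrow> M mod 72 = 2))
          \<and> (f mod 6 = 0 \<longrightarrow>
               (eta mod 6 = 1 \<longrightarrow> M mod 36 = 35) \<and> (eta mod 6 \<in> {3, 5} \<longrightarrow> M mod 36 = 11))
          \<and> (f mod 6 \<in> {2, 4} \<longrightarrow>
               (eta mod 6 = 1 \<longrightarrow> M mod 36 = 11) \<and> (eta mod 6 \<in> {3, 5} \<longrightarrow> M mod 36 = 23))))"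
  apply (intro conjI)
  apply (simp_all only: eodd d6 M12 simp_thms insert_iff empty_iff)
  apply simp
  apply (rule disjI1)
  using h e6 by simp
lemma X1:
  fixes eta delta M f :: int
  assumes eodd: "odd eta" and d6: "delta mod 6 = 0" and e6: "eta mod 6 \<in> {1,5}" and M12: "M mod 12 = 0"
   and h: "delta mod 36 \<in> {12, 24} \<and> M mod 144 = 96"
  shows "odd eta
    \<and> delta mod 6 \<in> {0, 1, 5}
    \<and> (delta mod 6 = 0 \<longrightarrow> M mod 12 = 0)
    \<and> (delta mod 6 \<in> {1, 5} \<longrightarrow>
          (odd f \<longrightarrow> M mod 12 = 2) \<and> (even f \<longrightarrow> M mod 12 = 11))
    \<and> ( (delta mod 36 = 0 \<and> eta mod 6 \<in> {1, 5} \<and> M mod 144 = 0)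
      \<or> (delta mod 36 \<in> {12, 24} \<and> eta mod 6 \<in> {1, 5} \<and> M mod 144 = 96)
      \<or> (delta mod 36 \<in> {6, 30} \<and> eta mod 6 \<in> {1, 5} \<and> f mod 2 = 1 \<and> M mod 144 = 24)
      \<or> (delta mod 36 = 18 \<and> eta mod 6 \<in> {1, 5} \<and> f mod 2 = 1 \<and> M mod 144 = 72)
      \<or> (delta mod 6 = 1
          \<and> (f mod 6 \<in> {1, 5} \<longrightarrow>
               (eta mod 6 \<in> {1, 3} \<longrightarrow> M mod 72 = 50) \<and> (eta mod 6 = 5 \<longrightarrow> M mod 72 = 2))
          \<and> (f mod 6 = 3 \<longrightarrow>
               (eta mod 6 \<in> {1, 3} \<longrightarrow> M mod 72 = 2) \<and> (eta mod 6 = 5 \<longrightarrow> M mod 72 = 26))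
          \<and> (f mod 6 = 0 \<longrightarrow>
               (eta mod 6 \<in> {1, 3} \<longrightarrow> M mod 36 = 11) \<and> (eta mod 6 = 5 \<longrightarrow> M mod 36 = 35))
          \<and> (f mod 6 \<in> {2, 4} \<longrightarrow>
               (eta mod 6 \<in> {1, 3} \<longrightarrow> M mod 36 = 23) \<and> (eta mod 6 = 5 \<longrightarrow> M mod 36 = 11)))
      \<or> (delta mod 6 = 5
          \<and> (f mod 6 \<in> {1, 5} \<longrightarrow>
               (eta mod 6 = 1 \<longrightarrow> M mod 72 = 2) \<and> (eta mod 6 \<in> {3, 5} \<longrightarrow> M mod 72 = 50))
          \<and> (f mod 6 = 3 \<longrightarrow>
               (eta mod 6 = 1 \<longrightarrow> M mod 72 = 26) \<and> (eta mod 6 \<in> {3, 5} \<longrightarrow> M mod 72 = 2))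
          \<and> (f mod 6 = 0 \<longrightarrow>
               (eta mod 6 = 1 \<longrightarrow> M mod 36 = 35) \<and> (eta mod 6 \<in> {3, 5} \<longrightarrow> M mod 36 = 11))
          \<and> (f mod 6 \<in> {2, 4} \<longrightarrow>
               (eta mod 6 = 1 \<longrightarrow> M mod 36 = 11) \<and> (eta mod 6 \<in> {3, 5} \<longrightarrow> M mod 36 = 23))))"
  apply (intro conjI)
  apply (simp_all only: eodd d6 M12 simp_thms insert_iff empty_iff)
  apply simp
  apply (rule disjI2)
  apply (rule disjI1)
  using h e6 by simp
lemma X2:
  fixes eta delta M f :: int
  assumes eodd: "odd eta" and d6: "delta mod 6 = 0" and e6: "eta mod 6 \<in> {1,5}" and M12: "M mod 12 = 0"
   and h: "delta mod 36 \<in> {6, 30} \<and> f mod 2 = 1 \<and> M mod 144 = 24"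
  shows "odd eta
    \<and> delta mod 6 \<in> {0, 1, 5}
    \<and> (delta mod 6 = 0 \<longrightarrow> M mod 12 = 0)
    \<and> (delta mod 6 \<in> {1, 5} \<longrightarrow>
          (odd f \<longrightarrow> M mod 12 = 2) \<and> (even f \<longrightarrow> M mod 12 = 11))
    \<and> ( (delta mod 36 = 0 \<and> eta mod 6 \<in> {1, 5} \<and> M mod 144 = 0)
      \<or> (delta mod 36 \<in> {12, 24} \<and> eta mod 6 \<in> {1, 5} \<and> M mod 144 = 96)
      \<or> (delta mod 36 \<in> {6, 30} \<and> eta mod 6 \<in> {1, 5} \<and> f mod 2 = 1 \<and> M mod 144 = 24)
      \<or> (delta mod 36 = 18 \<and> eta mod 6 \<in> {1, 5} \<and> f mod 2 = 1 \<and> M mod 144 = 72)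
      \<or> (delta mod 6 = 1
          \<and> (f mod 6 \<in> {1, 5} \<longrightarrow>
               (eta mod 6 \<in> {1, 3} \<longrightarrow> M mod 72 = 50) \<and> (eta mod 6 = 5 \<longrightarrow> M mod 72 = 2))
          \<and> (f mod 6 = 3 \<longrightarrow>
               (eta mod 6 \<in> {1, 3} \<longrightarrow> M mod 72 = 2) \<and> (eta mod 6 = 5 \<longrightarrow> M mod 72 = 26))
          \<and> (f mod 6 = 0 \<longrightarrow>
               (eta mod 6 \<in> {1, 3} \<longrightarrow> M mod 36 = 11) \<and> (eta mod 6 = 5 \<longrightarrow> M mod 36 = 35))
          \<and> (f mod 6 \<in> {2, 4} \<longrightarrow>
               (eta mod 6 \<in> {1, 3} \<longrightarrow> M mod 36 = 23) \<and> (eta mod 6 = 5 \<longrightarrow> M mod 36 = 11)))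
      \<or> (delta mod 6 = 5
          \<and> (f mod 6 \<in> {1, 5} \<longrightarrow>
               (eta mod 6 = 1 \<longrightarrow> M mod 72 = 2) \<and> (eta mod 6 \<in> {3, 5} \<longrightarrow> M mod 72 = 50))
          \<and> (f mod 6 = 3 \<longrightarrow>
               (eta mod 6 = 1 \<longrightarrow> M mod 72 = 26) \<and> (eta mod 6 \<in> {3, 5} \<longrightarrow> M mod 72 = 2))
          \<and> (f mod 6 = 0 \<longrightarrow>
               (eta mod 6 = 1 \<longrightarrow> M mod 36 = 35) \<and> (eta mod 6 \<in> {3, 5} \<longrightarrow> M mod 36 = 11))
          \<and> (f mod 6 \<in> {2, 4} \<longrightarrow>
               (eta mod 6 = 1 \<longrightarrow> M mod 36 = 11) \<and> (eta mod 6 \<in> {3, 5} \<longrightarrow> M mod 36 = 23))))"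
  apply (intro conjI)
  apply (simp_all only: eodd d6 M12 simp_thms insert_iff empty_iff)
  apply simp
  apply (rule disjI2)
  apply (rule disjI2)
  apply (rule disjI1)
  using h e6 by simp
lemma X3:
  fixes eta delta M f :: int
  assumes eodd: "odd eta" and d6: "delta mod 6 = 0" and e6: "eta mod 6 \<in> {1,5}" and M12: "M mod 12 = 0"
   and h: "delta mod 36 = 18 \<and> f mod 2 = 1 \<and> M mod 144 = 72"
  shows "odd eta
    \<and> delta mod 6 \<in> {0, 1, 5}
    \<and> (delta mod 6 = 0 \<longrightarrow> M mod 12 = 0)
    \<and> (delta mod 6 \<in> {1, 5} \<longrightarrow>
          (odd f \<longrightarrow> M mod 12 = 2) \<and> (even f \<longrightarrow> M mod 12 = 11))
    \<and> ( (delta mod 36 = 0 \<and> eta mod 6 \<in> {1, 5} \<and> M mod 144 = 0)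
      \<or> (delta mod 36 \<in> {12, 24} \<and> eta mod 6 \<in> {1, 5} \<and> M mod 144 = 96)
      \<or> (delta mod 36 \<in> {6, 30} \<and> eta mod 6 \<in> {1, 5} \<and> f mod 2 = 1 \<and> M mod 144 = 24)
      \<or> (delta mod 36 = 18 \<and> eta mod 6 \<in> {1, 5} \<and> f mod 2 = 1 \<and> M mod 144 = 72)
      \<or> (delta mod 6 = 1
          \<and> (f mod 6 \<in> {1, 5} \<longrightarrow>
               (eta mod 6 \<in> {1, 3} \<longrightarrow> M mod 72 = 50) \<and> (eta mod 6 = 5 \<longrightarrow> M mod 72 = 2))
          \<and> (f mod 6 = 3 \<longrightarrow>
               (eta mod 6 \<in> {1, 3} \<longrightarrow> M mod 72 = 2) \<and> (eta mod 6 = 5 \<longrightarrow> M mod 72 = 26))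
          \<and> (f mod 6 = 0 \<longrightarrow>
               (eta mod 6 \<in> {1, 3} \<longrightarrow> M mod 36 = 11) \<and> (eta mod 6 = 5 \<longrightarrow> M mod 36 = 35))
          \<and> (f mod 6 \<in> {2, 4} \<longrightarrow>
               (eta mod 6 \<in> {1, 3} \<longrightarrow> M mod 36 = 23) \<and> (eta mod 6 = 5 \<longrightarrow> M mod 36 = 11)))
      \<or> (delta mod 6 = 5
          \<and> (f mod 6 \<in> {1, 5} \<longrightarrow>
               (eta mod 6 = 1 \<longrightarrow> M mod 72 = 2) \<and> (eta mod 6 \<in> {3, 5} \<longrightarrow> M mod 72 = 50))
          \<and> (f mod 6 = 3 \<longrightarrow>
               (eta mod 6 = 1 \<longrightarrow> M mod 72 = 26) \<and> (eta mod 6 \<in> {3, 5} \<longrightarrow> M mod 72 = 2))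
          \<and> (f mod 6 = 0 \<longrightarrow>
               (eta mod 6 = 1 \<longrightarrow> M mod 36 = 35) \<and> (eta mod 6 \<in> {3, 5} \<longrightarrow> M mod 36 = 11))
          \<and> (f mod 6 \<in> {2, 4} \<longrightarrow>
               (eta mod 6 = 1 \<longrightarrow> M mod 36 = 11) \<and> (eta mod 6 \<in> {3, 5} \<longrightarrow> M mod 36 = 23))))"
  apply (intro conjI)
  apply (simp_all only: eodd d6 M12 simp_thms insert_iff empty_iff)
  apply simp
  apply (rule disjI2)
  apply (rule disjI2)
  apply (rule disjI2)
  apply (rule disjI1)
  using h e6 by simp
lemma Y0:
  fixes eta delta M f :: int
  assumes eodd: "odd eta" and d6: "delta mod 6 = 1" and P1: "(odd f \<longrightarrow> M mod 12 = 2) \<and> (even f \<longrightarrow> M mod 12 = 11)"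
   and h: "delta mod 6 = 1
          \<and> (f mod 6 \<in> {1, 5} \<longrightarrow>
               (eta mod 6 \<in> {1, 3} \<longrightarrow> M mod 72 = 50) \<and> (eta mod 6 = 5 \<longrightarrow> M mod 72 = 2))
          \<and> (f mod 6 = 3 \<longrightarrow>
               (eta mod 6 \<in> {1, 3} \<longrightarrow> M mod 72 = 2) \<and> (eta mod 6 = 5 \<longrightarrow> M mod 72 = 26))
          \<and> (f mod 6 = 0 \<longrightarrow>
               (eta mod 6 \<in> {1, 3} \<longrightarrow> M mod 36 = 11) \<and> (eta mod 6 = 5 \<longrightarrow> M mod 36 = 35))
          \<and> (f mod 6 \<in> {2, 4} \<longrightarrow>
               (eta mod 6 \<in> {1, 3} \<longrightarrow> M mod 36 = 23) \<and> (eta mod 6 = 5 \<longrightarrow> M mod 36 = 11))"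
  shows "odd eta
    \<and> delta mod 6 \<in> {0, 1, 5}
    \<and> (delta mod 6 = 0 \<longrightarrow> M mod 12 = 0)
    \<and> (delta mod 6 \<in> {1, 5} \<longrightarrow>
          (odd f \<longrightarrow> M mod 12 = 2) \<and> (even f \<longrightarrow> M mod 12 = 11))
    \<and> ( (delta mod 36 = 0 \<and> eta mod 6 \<in> {1, 5} \<and> M mod 144 = 0)
      \<or> (delta mod 36 \<in> {12, 24} \<and> eta mod 6 \<in> {1, 5} \<and> M mod 144 = 96)
      \<or> (delta mod 36 \<in> {6, 30} \<and> eta mod 6 \<in> {1, 5} \<and> f mod 2 = 1 \<and> M mod 144 = 24)
      \<or> (delta mod 36 = 18 \<and> eta mod 6 \<in> {1, 5} \<and> f mod 2 = 1 \<and> M mod 144 = 72)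
      \<or> (delta mod 6 = 1
          \<and> (f mod 6 \<in> {1, 5} \<longrightarrow>
               (eta mod 6 \<in> {1, 3} \<longrightarrow> M mod 72 = 50) \<and> (eta mod 6 = 5 \<longrightarrow> M mod 72 = 2))
          \<and> (f mod 6 = 3 \<longrightarrow>
               (eta mod 6 \<in> {1, 3} \<longrightarrow> M mod 72 = 2) \<and> (eta mod 6 = 5 \<longrightarrow> M mod 72 = 26))
          \<and> (f mod 6 = 0 \<longrightarrow>
               (eta mod 6 \<in> {1, 3} \<longrightarrow> M mod 36 = 11) \<and> (eta mod 6 = 5 \<longrightarrow> M mod 36 = 35))
          \<and> (f mod 6 \<in> {2, 4} \<longrightarrow>
               (eta mod 6 \<in> {1, 3} \<longrightarrow> M mod 36 = 23) \<and> (eta mod 6 = 5 \<longrightarrow> M mod 36 = 11)))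
      \<or> (delta mod 6 = 5
          \<and> (f mod 6 \<in> {1, 5} \<longrightarrow>
               (eta mod 6 = 1 \<longrightarrow> M mod 72 = 2) \<and> (eta mod 6 \<in> {3, 5} \<longrightarrow> M mod 72 = 50))
          \<and> (f mod 6 = 3 \<longrightarrow>
               (eta mod 6 = 1 \<longrightarrow> M mod 72 = 26) \<and> (eta mod 6 \<in> {3, 5} \<longrightarrow> M mod 72 = 2))
          \<and> (f mod 6 = 0 \<longrightarrow>
               (eta mod 6 = 1 \<longrightarrow> M mod 36 = 35) \<and> (eta mod 6 \<in> {3, 5} \<longrightarrow> M mod 36 = 11))
          \<and> (f mod 6 \<in> {2, 4} \<longrightarrow>
               (eta mod 6 = 1 \<longrightarrow> M mod 36 = 11) \<and> (eta mod 6 \<in> {3, 5} \<longrightarrow> M mod 36 = 23))))"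
  apply (intro conjI)
  apply (rule eodd)
  apply (simp add: d6)
  apply (simp add: d6)
  apply (simp add: d6 P1)
  apply (rule disjI2)
  apply (rule disjI2)
  apply (rule disjI2)
  apply (rule disjI2)
  apply (rule disjI1)
  by (rule h)
lemma Y1:
  fixes eta delta M f :: int
  assumes eodd: "odd eta" and d6: "delta mod 6 = 5" and P1: "(odd f \<longrightarrow> M mod 12 = 2) \<and> (even f \<longrightarrow> M mod 12 = 11)"
   and h: "delta mod 6 = 5
          \<and> (f mod 6 \<in> {1, 5} \<longrightarrow>
               (eta mod 6 = 1 \<longrightarrow> M mod 72 = 2) \<and> (eta mod 6 \<in> {3, 5} \<longrightarrow> M mod 72 = 50))
          \<and> (f mod 6 = 3 \<longrightarrow>
               (eta mod 6 = 1 \<longrightarrow> M mod 72 = 26) \<and> (eta mod 6 \<in> {3, 5} \<longrightarrow> M mod 72 = 2))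
          \<and> (f mod 6 = 0 \<longrightarrow>
               (eta mod 6 = 1 \<longrightarrow> M mod 36 = 35) \<and> (eta mod 6 \<in> {3, 5} \<longrightarrow> M mod 36 = 11))
          \<and> (f mod 6 \<in> {2, 4} \<longrightarrow>
               (eta mod 6 = 1 \<longrightarrow> M mod 36 = 11) \<and> (eta mod 6 \<in> {3, 5} \<longrightarrow> M mod 36 = 23))"
  shows "odd eta
    \<and> delta mod 6 \<in> {0, 1, 5}
    \<and> (delta mod 6 = 0 \<longrightarrow> M mod 12 = 0)
    \<and> (delta mod 6 \<in> {1, 5} \<longrightarrow>
          (odd f \<longrightarrow> M mod 12 = 2) \<and> (even f \<longrightarrow> M mod 12 = 11))
    \<and> ( (delta mod 36 = 0 \<and> eta mod 6 \<in> {1, 5} \<and> M mod 144 = 0)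
      \<or> (delta mod 36 \<in> {12, 24} \<and> eta mod 6 \<in> {1, 5} \<and> M mod 144 = 96)
      \<or> (delta mod 36 \<in> {6, 30} \<and> eta mod 6 \<in> {1, 5} \<and> f mod 2 = 1 \<and> M mod 144 = 24)
      \<or> (delta mod 36 = 18 \<and> eta mod 6 \<in> {1, 5} \<and> f mod 2 = 1 \<and> M mod 144 = 72)
      \<or> (delta mod 6 = 1
          \<and> (f mod 6 \<in> {1, 5} \<longrightarrow>
               (eta mod 6 \<in> {1, 3} \<longrightarrow> M mod 72 = 50) \<and> (eta mod 6 = 5 \<longrightarrow> M mod 72 = 2))
          \<and> (f mod 6 = 3 \<longrightarrow>
               (eta mod 6 \<in> {1, 3} \<longrightarrow> M mod 72 = 2) \<and> (eta mod 6 = 5 \<longrightarrow> M mod 72 = 26))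
          \<and> (f mod 6 = 0 \<longrightarrow>
               (eta mod 6 \<in> {1, 3} \<longrightarrow> M mod 36 = 11) \<and> (eta mod 6 = 5 \<longrightarrow> M mod 36 = 35))
          \<and> (f mod 6 \<in> {2, 4} \<longrightarrow>
               (eta mod 6 \<in> {1, 3} \<longrightarrow> M mod 36 = 23) \<and> (eta mod 6 = 5 \<longrightarrow> M mod 36 = 11)))
      \<or> (delta mod 6 = 5
          \<and> (f mod 6 \<in> {1, 5} \<longrightarrow>
               (eta mod 6 = 1 \<longrightarrow> M mod 72 = 2) \<and> (eta mod 6 \<in> {3, 5} \<longrightarrow> M mod 72 = 50))
          \<and> (f mod 6 = 3 \<longrightarrow>
               (eta mod 6 = 1 \<longrightarrow> M mod 72 = 26) \<and> (eta mod 6 \<in> {3, 5} \<longrightarrow> M mod 72 = 2))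
          \<and> (f mod 6 = 0 \<longrightarrow>
               (eta mod 6 = 1 \<longrightarrow> M mod 36 = 35) \<and> (eta mod 6 \<in> {3, 5} \<longrightarrow> M mod 36 = 11))
          \<and> (f mod 6 \<in> {2, 4} \<longrightarrow>
               (eta mod 6 = 1 \<longrightarrow> M mod 36 = 11) \<and> (eta mod 6 \<in> {3, 5} \<longrightarrow> M mod 36 = 23))))"
  apply (intro conjI)
  apply (rule eodd)
  apply (simp add: d6)
  apply (simp add: d6)
  apply (simp add: d6 P1)
  apply (rule disjI2)
  apply (rule disjI2)
  apply (rule disjI2)
  apply (rule disjI2)
  apply (rule disjI2)
  
  by (rule h)

lemma P2t:
  fixes M f eta delta :: int
  assumes d1: "delta mod 6 = 1" and eodd: "odd eta" and M8': "odd f \<longrightarrow> M mod 8 = 2" and M4': "even f \<longrightarrow> M mod 4 = 3"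
  and M9': "(3 dvd eta + delta \<and> 3 dvd f \<longrightarrow> M mod 9 = 8) \<and> (3 dvd eta + delta \<and> \<not> 3 dvd f \<longrightarrow> M mod 9 = 2) \<and> (\<not> 3 dvd eta + delta \<and> 3 dvd f \<longrightarrow> M mod 9 = 2) \<and> (\<not> 3 dvd eta + delta \<and> \<not> 3 dvd f \<longrightarrow> M mod 9 = 5)"
  shows "delta mod 6 = 1
          \<and> (f mod 6 \<in> {1, 5} \<longrightarrow>
               (eta mod 6 \<in> {1, 3} \<longrightarrow> M mod 72 = 50) \<and> (eta mod 6 = 5 \<longrightarrow> M mod 72 = 2))
          \<and> (f mod 6 = 3 \<longrightarrow>
               (eta mod 6 \<in> {1, 3} \<longrightarrow> M mod 72 = 2) \<and> (eta mod 6 = 5 \<longrightarrow> M mod 72 = 26))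
          \<and> (f mod 6 = 0 \<longrightarrow>
               (eta mod 6 \<in> {1, 3} \<longrightarrow> M mod 36 = 11) \<and> (eta mod 6 = 5 \<longrightarrow> M mod 36 = 35))
          \<and> (f mod 6 \<in> {2, 4} \<longrightarrow>
               (eta mod 6 \<in> {1, 3} \<longrightarrow> M mod 36 = 23) \<and> (eta mod 6 = 5 \<longrightarrow> M mod 36 = 11))"
    proof -
      have eA: "eta mod 6 = 5 \<longleftrightarrow> 3 dvd eta + delta" using d1 eodd by presburger
      have eB: "eta mod 6 \<in> {1,3} \<longleftrightarrow> \<not> 3 dvd eta + delta" unfolding insert_iff empty_iff using d1 eodd by presburger
      show ?thesis unfolding fmod6a fmod6b fmod6c fmod6d eA eB
        apply (intro conjI impI)
        apply (rule d1)
        apply (simp_all add: M8' M4' M9' crt89 crt49)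
        done
    qed


lemma P3t:
  fixes M f eta delta :: int
  assumes d1: "delta mod 6 = 5" and eodd: "odd eta" and M8': "odd f \<longrightarrow> M mod 8 = 2" and M4': "even f \<longrightarrow> M mod 4 = 3"
  and M9': "(3 dvd eta + delta \<and> 3 dvd f \<longrightarrow> M mod 9 = 8) \<and> (3 dvd eta + delta \<and> \<not> 3 dvd f \<longrightarrow> M mod 9 = 2) \<and> (\<not> 3 dvd eta + delta \<and> 3 dvd f \<longrightarrow> M mod 9 = 2) \<and> (\<not> 3 dvd eta + delta \<and> \<not> 3 dvd f \<longrightarrow> M mod 9 = 5)"
  shows "delta mod 6 = 5
          \<and> (f mod 6 \<in> {1, 5} \<longrightarrow>
               (eta mod 6 = 1 \<longrightarrow> M mod 72 = 2) \<and> (eta mod 6 \<in> {3, 5} \<longrightarrow> M mod 72 = 50))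
          \<and> (f mod 6 = 3 \<longrightarrow>
               (eta mod 6 = 1 \<longrightarrow> M mod 72 = 26) \<and> (eta mod 6 \<in> {3, 5} \<longrightarrow> M mod 72 = 2))
          \<and> (f mod 6 = 0 \<longrightarrow>
               (eta mod 6 = 1 \<longrightarrow> M mod 36 = 35) \<and> (eta mod 6 \<in> {3, 5} \<longrightarrow> M mod 36 = 11))
          \<and> (f mod 6 \<in> {2, 4} \<longrightarrow>
               (eta mod 6 = 1 \<longrightarrow> M mod 36 = 11) \<and> (eta mod 6 \<in> {3, 5} \<longrightarrow> M mod 36 = 23))"
    proof -
      have eA: "eta mod 6 = 1 \<longleftrightarrow> 3 dvd eta + delta" using d1 eodd by presburger
      have eB: "eta mod 6 \<in> {3,5} \<longleftrightarrow> \<not> 3 dvd eta + delta" unfolding insert_iff empty_iff using d1 eodd by presburger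
      show ?thesis unfolding fmod6a fmod6b fmod6c fmod6d eA eB
        apply (intro conjI impI)
        apply (rule d1)
        apply (simp_all add: M8' M4' M9' crt89 crt49)
        done
    qed

lemma lin8: "(x::int) mod 8 = 1 \<Longrightarrow> (3*x - 1) mod 8 = 2" by presburger
theorem theorem1:
  fixes eta delta M f :: int
  assumes "eta > 1" and "delta > 1" and "M > 1" and "f > 0"
    and "gcd eta delta = 1"
    and "3 * ((delta * f)^2 - M * (eta + delta)^2) = delta^2 * (M + 1)"
    and "\<exists>a::int. a \<ge> 1 \<and> (\<exists>k::int. (\<Sum>i\<in>{0..M-1}. (a + i)^2) = k^2)"
  shows "odd eta
    \<and> delta mod 6 \<in> {0, 1, 5}
    \<and> (delta mod 6 = 0 \<longrightarrow> M mod 12 = 0)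
    \<and> (delta mod 6 \<in> {1, 5} \<longrightarrow>
          (odd f \<longrightarrow> M mod 12 = 2) \<and> (even f \<longrightarrow> M mod 12 = 11))
    \<and> ( (delta mod 36 = 0 \<and> eta mod 6 \<in> {1, 5} \<and> M mod 144 = 0)
      \<or> (delta mod 36 \<in> {12, 24} \<and> eta mod 6 \<in> {1, 5} \<and> M mod 144 = 96)
      \<or> (delta mod 36 \<in> {6, 30} \<and> eta mod 6 \<in> {1, 5} \<and> f mod 2 = 1 \<and> M mod 144 = 24)
      \<or> (delta mod 36 = 18 \<and> eta mod 6 \<in> {1, 5} \<and> f mod 2 = 1 \<and> M mod 144 = 72)
      \<or> (delta mod 6 = 1
          \<and> (f mod 6 \<in> {1, 5} \<longrightarrow>
               (eta mod 6 \<in> {1, 3} \<longrightarrow> M mod 72 = 50) \<and> (eta mod 6 = 5 \<longrightarrow> M mod 72 = 2))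
          \<and> (f mod 6 = 3 \<longrightarrow>
               (eta mod 6 \<in> {1, 3} \<longrightarrow> M mod 72 = 2) \<and> (eta mod 6 = 5 \<longrightarrow> M mod 72 = 26))
          \<and> (f mod 6 = 0 \<longrightarrow>
               (eta mod 6 \<in> {1, 3} \<longrightarrow> M mod 36 = 11) \<and> (eta mod 6 = 5 \<longrightarrow> M mod 36 = 35))
          \<and> (f mod 6 \<in> {2, 4} \<longrightarrow>
               (eta mod 6 \<in> {1, 3} \<longrightarrow> M mod 36 = 23) \<and> (eta mod 6 = 5 \<longrightarrow> M mod 36 = 11)))
      \<or> (delta mod 6 = 5
          \<and> (f mod 6 \<in> {1, 5} \<longrightarrow>
               (eta mod 6 = 1 \<longrightarrow> M mod 72 = 2) \<and> (eta mod 6 \<in> {3, 5} \<longrightarrow> M mod 72 = 50))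
          \<and> (f mod 6 = 3 \<longrightarrow>
               (eta mod 6 = 1 \<longrightarrow> M mod 72 = 26) \<and> (eta mod 6 \<in> {3, 5} \<longrightarrow> M mod 72 = 2))
          \<and> (f mod 6 = 0 \<longrightarrow>
               (eta mod 6 = 1 \<longrightarrow> M mod 36 = 35) \<and> (eta mod 6 \<in> {3, 5} \<longrightarrow> M mod 36 = 11))
          \<and> (f mod 6 \<in> {2, 4} \<longrightarrow>
               (eta mod 6 = 1 \<longrightarrow> M mod 36 = 11) \<and> (eta mod 6 \<in> {3, 5} \<longrightarrow> M mod 36 = 23))))"
proof -
  define u where "u = eta + delta"
  define D where "D = 3*u^2 + delta^2"
  define g where "g = 3*f^2 - 1"
  have key: "M * D = delta^2 * g"
    using assms(6) unfolding D_def g_def u_def by (simp add: algebra_simps)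
  have notM4: "M mod 8 \<noteq> 4"
  proof
    assume h: "M mod 8 = 4"
    from assms(7) obtain a k where "(\<Sum>i\<in>{0..M-1}. (a + i)^2) = k^2" by blast
    then show False using not_sq_M4[OF h] assms(3) by simp
  qed
  have g3: "g mod 3 = 2" unfolding g_def by (rule t1)
  have gcd1: "coprime eta delta" using assms(5) by (simp add: coprime_iff_gcd_eq_1)
  have eodd: "odd eta"
  proof
    assume ee: "even eta"
    have dodd: "odd delta"
    proof
      assume "even delta"
      then have "2 dvd gcd eta delta" using ee by simp
      then show False using assms(5) by simp
    qed
    obtain e' where e': "eta = 2*e'" using ee by blast
    have "D = 4*(3*e'^2 + 3*e'*delta + delta^2)"
      unfolding D_def u_def e' by (simp add: algebra_simps power2_eq_square)
    then have "4 dvd delta^2 * g" using key by (metis dvd_mult dvd_triv_left)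
    have c2: "coprime 2 delta" using dodd by (simp add: coprime_commute)
    have "coprime ((2::int)^2) (delta^2)" using c2 by (metis coprime_power_left_iff coprime_power_right_iff)
    moreover have "(2::int)^2 = 4" by simp
    ultimately have "coprime 4 (delta^2)" by metis
    with \<open>4 dvd delta^2 * g\<close>
    have "4 dvd g" by (simp add: coprime_dvd_mult_right_iff)
    moreover have "g mod 4 = (3*(f mod 4)^2 - 1) mod 4" unfolding g_def using mp1[of 3 f "-1" 4] by simp
    moreover have "f mod 4 \<in> {0,1,2,3}" by auto
    ultimately show False by auto
  qed
  show ?thesis
  proof (cases "3 dvd delta")
    case False
    have "gcd delta u = gcd delta eta" unfolding u_def by (metis gcd_add2 add.commute)
    then have cdu: "coprime delta u" using gcd1
      by (simp add: coprime_iff_gcd_eq_1 gcd.commute)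
    have "coprime 3 delta" using False by (simp add: prime_imp_coprime)
    then have cd3: "coprime delta 3" by (simp add: coprime_commute)
    have "coprime delta (3*u^2)" using cdu cd3 by simp
    moreover have "gcd delta D = gcd delta (3*u^2)" unfolding D_def
      by (metis gcd_add_mult add.commute power2_eq_square)
    ultimately have cdD: "coprime delta D" by (simp add: coprime_iff_gcd_eq_1)
    have Dpos: "D > 0" unfolding D_def using assms(2) by (simp add: add_nonneg_pos)
    have Ddvd: "D dvd g"
    proof -
      have "D dvd delta^2 * g" using key by (metis dvd_triv_right)
      moreover have "coprime D (delta^2)" using cdD by (simp add: coprime_commute)
      ultimately show ?thesis by (simp add: coprime_dvd_mult_right_iff)
    qed
    have dodd: "odd delta"
    proof
      assume de: "even delta"
      have uodd: "odd u" unfolding u_def using de eodd by simp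
      have "D mod 4 = (3*(u mod 4)^2 + (delta mod 4)^2) mod 4" unfolding D_def using mp2[of 3 u 1 delta 4] by simp
      moreover have "u mod 4 \<in> {1,3}" using uodd by (simp only: insert_iff empty_iff) presburger
      moreover have "delta mod 4 \<in> {0,2}" using de by (simp only: insert_iff empty_iff) presburger
      ultimately have D4: "D mod 4 = 3" by auto
      have "(3*u*f)^2 + delta^2 = 3*f^2*D - delta^2*g"
        unfolding D_def g_def by (simp add: algebra_simps power2_eq_square)
      moreover have "D dvd 3*f^2*D - delta^2*g" using Ddvd by simp
      ultimately have "D dvd (3*u*f)^2 + delta^2" by simp
      then show False using sumsq_int[OF Dpos D4] cdD by blast
    qed
    have ueven: "even u" unfolding u_def using dodd eodd by simp
    have A16: "3*u^2 mod 16 \<in> {0,12}"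
    proof -
      have "u mod 16 \<in> {0,2,4,6,8,10,12,14}" using ueven by (simp only: insert_iff empty_iff) presburger
      moreover have "3*u^2 mod 16 = (3*(u mod 16)^2) mod 16" using mp1[of 3 u 0 16] by simp
      ultimately show ?thesis by auto
    qed
    have B16: "delta^2 mod 16 \<in> {1,9}"
    proof -
      have "delta mod 16 \<in> {1,3,5,7,9,11,13,15}" using dodd by (simp only: insert_iff empty_iff) presburger
      moreover have "delta^2 mod 16 = ((delta mod 16)^2) mod 16" by (simp add: power_mod)
      ultimately show ?thesis by auto
    qed
    have E16: "((M mod 16)*((3*u^2 mod 16) + (delta^2 mod 16))) mod 16 = ((delta^2 mod 16)*(g mod 16)) mod 16"
    proof -
      have "(M*D) mod 16 = (delta^2*g) mod 16" using key by simp
      then show ?thesis unfolding D_def modcomb mod_mult_eq .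
    qed
    have gf16: "g mod 16 = (3*(f mod 16)^2 - 1) mod 16" unfolding g_def using mp1[of 3 f "-1" 16] by simp
    have M8: "odd f \<Longrightarrow> M mod 8 = 2"
    proof -
      assume fo: "odd f"
      have "f mod 16 \<in> {1,3,5,7,9,11,13,15}" using fo by (simp only: insert_iff empty_iff) presburger
      then have "g mod 16 \<in> {2,10}" using gf16 by auto
      then have "(M mod 16) mod 8 = 2"
        using res16_odd[OF _ _ A16 B16 _ E16] by simp
      then show ?thesis by (simp add: mod_mod_cancel)
    qed
    have M4: "even f \<Longrightarrow> M mod 4 = 3"
    proof -
      assume fe: "even f"
      have "f mod 16 \<in> {0,2,4,6,8,10,12,14}" using fe by (simp only: insert_iff empty_iff) presburger
      then have "g mod 16 \<in> {11,15}" using gf16 by auto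
      then have "(M mod 16) mod 4 = 3"
        using res16_even[OF _ _ A16 B16 _ E16] by simp
      then show ?thesis by (simp add: mod_mod_cancel)
    qed
    have A9: "3*u^2 mod 9 = (if 3 dvd u then 0 else 3)"
    proof -
      have "u mod 9 \<in> {0,1,2,3,4,5,6,7,8}" by (simp only: insert_iff empty_iff) presburger
      moreover have "3*u^2 mod 9 = (3*(u mod 9)^2) mod 9" using mp1[of 3 u 0 9] by simp
      moreover have "3 dvd u \<longleftrightarrow> 3 dvd (u mod 9)" by presburger
      ultimately show ?thesis by auto
    qed
    have B9: "delta^2 mod 9 \<in> {1,4,7}"
    proof -
      have "delta mod 9 \<in> {1,2,4,5,7,8}" using False by (simp only: insert_iff empty_iff) presburger
      moreover have "delta^2 mod 9 = ((delta mod 9)^2) mod 9" by (simp add: power_mod)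
      ultimately show ?thesis by auto
    qed
    have G9: "g mod 9 = (if 3 dvd f then 8 else 2)"
    proof -
      have "f mod 9 \<in> {0,1,2,3,4,5,6,7,8}" by (simp only: insert_iff empty_iff) presburger
      moreover have "g mod 9 = (3*(f mod 9)^2 - 1) mod 9" unfolding g_def using mp1[of 3 f "-1" 9] by simp
      moreover have "3 dvd f \<longleftrightarrow> 3 dvd (f mod 9)" by presburger
      ultimately show ?thesis by auto
    qed
    have E9: "((M mod 9)*((3*u^2 mod 9) + (delta^2 mod 9))) mod 9 = ((delta^2 mod 9)*(g mod 9)) mod 9"
    proof -
      have "(M*D) mod 9 = (delta^2*g) mod 9" using key by simp
      then show ?thesis unfolding D_def modcomb mod_mult_eq .
    qed
    have M9: "M mod 9 = (if 3 dvd u then (if 3 dvd f then 8 else 2) else (if 3 dvd f then 2 else 5))"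
    proof -
      have a: "3*u^2 mod 9 \<in> {0,3}" using A9 by auto
      have b: "g mod 9 \<in> {2,8}" using G9 by auto
      show ?thesis using res9[OF _ _ a B9 b E9] A9 G9 by (auto split: if_splits)
    qed
    have d6: "delta mod 6 \<in> {1,5}" using dodd False by (simp only: insert_iff empty_iff) presburger
    have M8': "odd f \<longrightarrow> M mod 8 = 2" using M8 by blast
    have M4': "even f \<longrightarrow> M mod 4 = 3" using M4 by blast
    have M9': "(3 dvd eta + delta \<and> 3 dvd f \<longrightarrow> M mod 9 = 8) \<and> (3 dvd eta + delta \<and> \<not> 3 dvd f \<longrightarrow> M mod 9 = 2)
       \<and> (\<not> 3 dvd eta + delta \<and> 3 dvd f \<longrightarrow> M mod 9 = 2) \<and> (\<not> 3 dvd eta + delta \<and> \<not> 3 dvd f \<longrightarrow> M mod 9 = 5)"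
      using M9 unfolding u_def by simp
    have P1: "(odd f \<longrightarrow> M mod 12 = 2) \<and> (even f \<longrightarrow> M mod 12 = 11)"
    proof -
      have "M mod 9 = 2 \<or> M mod 9 = 5 \<or> M mod 9 = 8" using M9 by (auto split: if_splits)
      then have "(M mod 9) mod 3 = 2" by auto
      then have m3: "M mod 3 = 2" by (simp add: mod_mod_cancel)
      have "odd f \<longrightarrow> M mod 12 = 2"
      proof
        assume "odd f" then have "M mod 8 = 2" using M8 by blast
        then have "(M mod 8) mod 4 = 2" by simp
        then have "M mod 4 = 2" by (simp add: mod_mod_cancel)
        with crt43[OF m3] show "M mod 12 = 2" by blast
      qed
      moreover have "even f \<longrightarrow> M mod 12 = 11"
      proof
        assume "even f" then have "M mod 4 = 3" using M4 by blast
        with crt43[OF m3] show "M mod 12 = 11" by blast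
      qed
      ultimately show ?thesis by blast
    qed
    have P2: "delta mod 6 = 1
          \<and> (f mod 6 \<in> {1, 5} \<longrightarrow>
               (eta mod 6 \<in> {1, 3} \<longrightarrow> M mod 72 = 50) \<and> (eta mod 6 = 5 \<longrightarrow> M mod 72 = 2))
          \<and> (f mod 6 = 3 \<longrightarrow>
               (eta mod 6 \<in> {1, 3} \<longrightarrow> M mod 72 = 2) \<and> (eta mod 6 = 5 \<longrightarrow> M mod 72 = 26))
          \<and> (f mod 6 = 0 \<longrightarrow>
               (eta mod 6 \<in> {1, 3} \<longrightarrow> M mod 36 = 11) \<and> (eta mod 6 = 5 \<longrightarrow> M mod 36 = 35))
          \<and> (f mod 6 \<in> {2, 4} \<longrightarrow>
               (eta mod 6 \<in> {1, 3} \<longrightarrow> M mod 36 = 23) \<and> (eta mod 6 = 5 \<longrightarrow> M mod 36 = 11))" if d1: "delta mod 6 = 1"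
      using P2t[OF that eodd M8' M4' M9'] .
    have P3: "delta mod 6 = 5
          \<and> (f mod 6 \<in> {1, 5} \<longrightarrow>
               (eta mod 6 = 1 \<longrightarrow> M mod 72 = 2) \<and> (eta mod 6 \<in> {3, 5} \<longrightarrow> M mod 72 = 50))
          \<and> (f mod 6 = 3 \<longrightarrow>
               (eta mod 6 = 1 \<longrightarrow> M mod 72 = 26) \<and> (eta mod 6 \<in> {3, 5} \<longrightarrow> M mod 72 = 2))
          \<and> (f mod 6 = 0 \<longrightarrow>
               (eta mod 6 = 1 \<longrightarrow> M mod 36 = 35) \<and> (eta mod 6 \<in> {3, 5} \<longrightarrow> M mod 36 = 11))
          \<and> (f mod 6 \<in> {2, 4} \<longrightarrow>
               (eta mod 6 = 1 \<longrightarrow> M mod 36 = 11) \<and> (eta mod 6 \<in> {3, 5} \<longrightarrow> M mod 36 = 23))" if d1: "delta mod 6 = 5"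
      using P3t[OF that eodd M8' M4' M9'] .
    show ?thesis
    proof -
      have d6': "delta mod 6 = 1 \<or> delta mod 6 = 5" using d6 by simp
      then show ?thesis
      proof
        assume h: "delta mod 6 = 1" show ?thesis by (rule Y0[OF eodd h P1 P2[OF h]])
      next
        assume h: "delta mod 6 = 5" show ?thesis by (rule Y1[OF eodd h P1 P3[OF h]])
      qed
    qed
  next
    case True
    then obtain k where k: "delta = 3*k" by blast
    define D' where "D' = u^2 + 3*k^2"
    have DD: "D = 3*D'" unfolding D_def D'_def k by (simp add: algebra_simps power2_eq_square)
    have key': "M * D' = 3*k^2*g" using key unfolding DD k by (simp add: algebra_simps power2_eq_square)
    have e3: "\<not> 3 dvd eta"
    proof
      assume "3 dvd eta"
      then have "3 dvd gcd eta delta" using True by simp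
      then show False using assms(5) by simp
    qed
    have u3: "\<not> 3 dvd u" unfolding u_def using e3 True by (simp add: dvd_add_left_iff)
    have D'3: "D' mod 3 = 1"
    proof -
      have "D' mod 3 = (u^2 + 3*k^2) mod 3" unfolding D'_def by simp
      also have "\<dots> = (u^2) mod 3" by simp
      finally have "D' mod 3 = (u^2 mod 3) mod 3" by simp
      then show ?thesis using sq_mod3[OF u3] by simp
    qed
    have cku: "coprime k u"
    proof -
      have "coprime eta k" using gcd1 k by (metis coprime_mult_right_iff)
      moreover have "gcd k u = gcd k eta" unfolding u_def k by (metis gcd_add_mult add.commute mult.commute)
      ultimately show ?thesis by (simp add: coprime_iff_gcd_eq_1 gcd.commute)
    qed
    have "coprime k (u^2)" using cku by simp
    moreover have "gcd k D' = gcd k (u^2)" unfolding D'_def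
      by (metis gcd_add_mult add.commute power2_eq_square mult.commute mult.assoc)
    ultimately have ckD': "coprime k D'" by (simp add: coprime_iff_gcd_eq_1)
    have D'pos: "D' > 0" unfolding D'_def using assms(2) k by (simp add: add_nonneg_pos)
    have devn: "even delta"
    proof (rule ccontr)
      assume dodd: "odd delta"
      have kodd: "odd k" using dodd k by simp
      have ueven: "even u" unfolding u_def using dodd eodd by simp
      have "D' mod 4 = ((u mod 4)^2 + 3*(k mod 4)^2) mod 4" unfolding D'_def using mp2[of 1 u 3 k 4] by simp
      moreover have "u mod 4 \<in> {0,2}" using ueven by (simp only: insert_iff empty_iff) presburger
      moreover have "k mod 4 \<in> {1,3}" using kodd by (simp only: insert_iff empty_iff) presburger
      ultimately have D4: "D' mod 4 = 3" by auto
      have "D' dvd g"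
      proof -
        have "D' dvd (3*k^2) * g" using key' by (metis dvd_triv_right)
        moreover have "coprime D' (3*k^2)"
        proof -
          have "\<not> 3 dvd D'" using D'3 by presburger
          then have "coprime 3 D'" by (simp add: prime_imp_coprime)
          then show ?thesis using ckD' by (simp add: coprime_commute)
        qed
        ultimately show ?thesis by (simp add: coprime_dvd_mult_right_iff)
      qed
      moreover have "(u*f)^2 + k^2 = f^2*D' - k^2*g"
        unfolding D'_def g_def by (simp add: algebra_simps power2_eq_square)
      ultimately have "D' dvd (u*f)^2 + k^2" by simp
      then show False using sumsq_int[OF D'pos D4] ckD' by blast
    qed
    have keven: "even k" using devn k by simp
    have uodd: "odd u" unfolding u_def using devn eodd by simp
    have D'odd: "odd D'" unfolding D'_def using uodd keven by simp
    have D'n3: "\<not> 3 dvd D'" using D'3 by presburger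
    have cop: "\<And>a b. coprime (2^a*3^b) D'" using cop_236[OF D'odd D'n3] by blast
    have e6: "eta mod 6 \<in> {1,5}" using eodd e3 by (simp only: insert_iff empty_iff) presburger
    have d6: "delta mod 6 = 0" using devn True by presburger
    have fodd_h: "odd f \<Longrightarrow> \<exists>h. g = 2*h \<and> odd h \<and> h mod 3 = 1"
    proof -
      assume fo: "odd f"
      have "f^2 mod 8 = 1" using sq_mod8_odd[OF fo] .
      then have "g mod 8 = 2" unfolding g_def by (rule lin8)
      then have "even g" by presburger
      then obtain h where h: "g = 2*h" by blast
      hence "odd h" using \<open>g mod 8 = 2\<close> by presburger
      moreover have "h mod 3 = 1" using h g3 by presburger
      ultimately show ?thesis using h by blast
    qed
    have dk: "delta mod 36 = 3*(k mod 12)" unfolding k using mod_mult_mult1[of 3 k 12] by simp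
    have kcase: "k mod 12 \<in> {0,2,4,6,8,10}"
    proof -
      obtain i where i: "k = 2*i" using keven by blast
      have "i mod 6 \<in> {0,1,2,3,4,5}" by (simp only: insert_iff empty_iff) presburger
      moreover have "k mod 12 = 2*(i mod 6)" unfolding i using mod_mult_mult1[of 2 i 6] by simp
      ultimately show ?thesis by auto
    qed
    have M144: "(delta mod 36 = 0 \<and> M mod 144 = 0)
      \<or> (delta mod 36 \<in> {12, 24} \<and> M mod 144 = 96)
      \<or> (delta mod 36 \<in> {6, 30} \<and> f mod 2 = 1 \<and> M mod 144 = 24)
      \<or> (delta mod 36 = 18 \<and> f mod 2 = 1 \<and> M mod 144 = 72)"
    proof -
      consider (c0) "k mod 12 = 0" | (c48) "k mod 12 \<in> {4,8}" | (c2) "k mod 12 \<in> {2,10}" | (c6) "k mod 12 = 6"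
        using kcase by auto
      then show ?thesis
      proof cases
        case c0
        then obtain j where j: "k = 12*j" by auto
        have "M * D' = (2^4*3^3) * (j^2*g)" using key' unfolding j by (simp add: algebra_simps power2_eq_square)
        then have "(2^4*3^3) dvd M * D'" by simp
        then have "(2^4*3^3::int) dvd M" using cop[of 4 3] by (simp add: coprime_dvd_mult_left_iff)
        then have "M mod 144 = 0" by auto
        moreover have "delta mod 36 = 0" using dk c0 by simp
        ultimately show ?thesis by blast
      next
        case c48
        have "(k mod 12) mod 4 = 0" using c48 by auto
        then have "k mod 4 = 0" by (simp add: mod_mod_cancel)
        then obtain j where j: "k = 4*j" by auto
        have "k mod 12 = 4*(j mod 3)" unfolding j using mod_mult_mult1[of 4 j 3] by simp
        then have "j mod 3 \<noteq> 0" using c48 by auto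
        then have j3: "\<not> 3 dvd j" by auto
        have "M * D' = (2^4*3^1) * (j^2*g)" using key' unfolding j by (simp add: algebra_simps power2_eq_square)
        then have "(2^4*3^1) dvd M * D'" by simp
        then have "(2^4*3^1::int) dvd M" using cop[of 4 1] by (simp add: coprime_dvd_mult_left_iff)
        then obtain m where m: "M = 48*m" by auto
        have "48 * (m * D') = 48 * (j^2 * g)" using key' unfolding j m by (simp add: algebra_simps power2_eq_square)
        then have eq: "m * D' = j^2 * g" by simp
        have "((m mod 3)*(D' mod 3)) mod 3 = ((j^2 mod 3)*(g mod 3)) mod 3" unfolding mod_mult_eq using eq by simp
        then have "m mod 3 = 2" using D'3 sq_mod3[OF j3] g3 by simp
        then have "M mod 144 = 96" using m mod_mult_mult1[of 48 m 3] by simp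
        moreover have "delta mod 36 \<in> {12,24}" using dk c48 by auto
        ultimately show ?thesis by blast
      next
        case c2
        have "(k mod 12) mod 2 = 0" using c2 by auto
        then have "k mod 2 = 0" by (simp add: mod_mod_cancel)
        then obtain j where j: "k = 2*j" by auto
        have "k mod 12 = 2*(j mod 6)" unfolding j using mod_mult_mult1[of 2 j 6] by simp
        then have "j mod 6 \<in> {1,5}" using c2 by auto
        then have j6: "j mod 6 = 1 \<or> j mod 6 = 5" by simp
        have j3: "\<not> 3 dvd j" "odd j" using j6 by presburger+
        have "M * D' = (2^2*3^1) * (j^2*g)" using key' unfolding j by (simp add: algebra_simps power2_eq_square)
        then have "(2^2*3^1) dvd M * D'" by simp
        then have "(2^2*3^1::int) dvd M" using cop[of 2 1] by (simp add: coprime_dvd_mult_left_iff)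
        then obtain m where m: "M = 12*m" by auto
        have "12 * (m * D') = 12 * (j^2 * g)" using key' unfolding j m by (simp add: algebra_simps power2_eq_square)
        then have eq: "m * D' = j^2 * g" by simp
        have fo: "odd f"
        proof
          assume fe: "even f"
          have "odd g" unfolding g_def using fe by simp
          then have "odd (m * D')" using eq j3 by simp
          then have "odd m" by simp
          then have "(3*m) mod 2 = 1" by presburger
          then have "M mod 8 = 4" using m mod_mult_mult1[of 4 "3*m" 2] by simp
          with notM4 show False by simp
        qed
        obtain h where h: "g = 2*h" "odd h" "h mod 3 = 1" using fodd_h[OF fo] by blast
        have "M * D' = (2^3*3^1) * (j^2*h)" using key' unfolding j h(1) by (simp add: algebra_simps power2_eq_square)
        then have "(2^3*3^1) dvd M * D'" by simp
        then have "(2^3*3^1::int) dvd M" using cop[of 3 1] by (simp add: coprime_dvd_mult_left_iff)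
        then obtain m' where m': "M = 24*m'" by auto
        have "24 * (m' * D') = 24 * (j^2 * h)" using key' unfolding j m' h(1) by (simp add: algebra_simps power2_eq_square)
        then have eq': "m' * D' = j^2 * h" by simp
        then have "odd (m' * D')" using h(2) j3 by simp
        then have mo: "odd m'" by simp
        have "((m' mod 3)*(D' mod 3)) mod 3 = ((j^2 mod 3)*(h mod 3)) mod 3" unfolding mod_mult_eq using eq' by simp
        then have "m' mod 3 = 1" using D'3 sq_mod3[OF j3(1)] h(3) by simp
        then have "m' mod 6 = 1" using mo by presburger
        then have "M mod 144 = 24" using m' mod_mult_mult1[of 24 m' 6] by simp
        moreover have "delta mod 36 \<in> {6,30}" using dk c2 by auto
        moreover have "f mod 2 = 1" using fo by presburger
        ultimately show ?thesis by blast
      next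
        case c6
        have "(k mod 12) mod 6 = 0" using c6 by auto
        then have "k mod 6 = 0" by (simp add: mod_mod_cancel)
        then obtain j where j: "k = 6*j" by auto
        have "k mod 12 = 6*(j mod 2)" unfolding j using mod_mult_mult1[of 6 j 2] by simp
        then have "j mod 2 = 1" using c6 by auto
        then have j3: "odd j" by presburger
        have "M * D' = (2^2*3^3) * (j^2*g)" using key' unfolding j by (simp add: algebra_simps power2_eq_square)
        then have "(2^2*3^3) dvd M * D'" by simp
        then have "(2^2*3^3::int) dvd M" using cop[of 2 3] by (simp add: coprime_dvd_mult_left_iff)
        then obtain m where m: "M = 108*m" by auto
        have "108 * (m * D') = 108 * (j^2 * g)" using key' unfolding j m by (simp add: algebra_simps power2_eq_square)
        then have eq: "m * D' = j^2 * g" by simp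
        have fo: "odd f"
        proof
          assume fe: "even f"
          have "odd g" unfolding g_def using fe by simp
          then have "odd (m * D')" using eq j3 by simp
          then have "odd m" by simp
          then have "(27*m) mod 2 = 1" by presburger
          then have "M mod 8 = 4" using m mod_mult_mult1[of 4 "27*m" 2] by simp
          with notM4 show False by simp
        qed
        obtain h where h: "g = 2*h" "odd h" "h mod 3 = 1" using fodd_h[OF fo] by blast
        have "even (m * D')" using eq h(1) by simp
        then have "even m" using D'odd by simp
        then obtain m' where m': "m = 2*m'" by blast
        have "2 * (m' * D') = 2 * (j^2 * h)" using eq unfolding m' h(1) by (simp add: algebra_simps)
        then have "m' * D' = j^2 * h" by simp
        then have "odd (m' * D')" using h(2) j3 by simp
        then have mo: "odd m'" by simp
        have "M = 72 * (3 * m')" using m m' by simp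
        moreover have "(3*m') mod 2 = 1" using mo by presburger
        ultimately have "M mod 144 = 72" using mod_mult_mult1[of 72 "3*m'" 2] by simp
        moreover have "delta mod 36 = 18" using dk c6 by simp
        moreover have "f mod 2 = 1" using fo by presburger
        ultimately show ?thesis by blast
      qed
    qed
    have M12: "M mod 12 = 0"
    proof -
      have "M mod 144 \<in> {0,96,24,72}" using M144 by auto
      moreover have "(M mod 144) mod 12 = M mod 12" by (simp add: mod_mod_cancel)
      ultimately show ?thesis by auto
    qed
    have d6': "delta mod 6 \<in> {0,1,5}" "\<not> delta mod 6 \<in> {1,5}" using d6 by simp_all
    from M144 show ?thesis
    proof (elim disjE)
      assume "delta mod 36 = 0 \<and> M mod 144 = 0" then show ?thesis by (rule X0[OF eodd d6 e6 M12])
    next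
      assume "delta mod 36 \<in> {12, 24} \<and> M mod 144 = 96" then show ?thesis by (rule X1[OF eodd d6 e6 M12])
    next
      assume "delta mod 36 \<in> {6, 30} \<and> f mod 2 = 1 \<and> M mod 144 = 24" then show ?thesis by (rule X2[OF eodd d6 e6 M12])
    next
      assume "delta mod 36 = 18 \<and> f mod 2 = 1 \<and> M mod 144 = 72" then show ?thesis by (rule X3[OF eodd d6 e6 M12])
    qed
  qed
qed

end
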